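(* Let $G$ be a finite group, and let $H$ be a normal subgroup of $G$ such that $G/H$ is cyclic. Let $K$ be a subgroup with $H\le K\le G$. Then the $G$-conjugacy classes contained in $K$ whose centralizing subgroup (with respect to $H$) is $K$ are equally distributed between the cosets of $H$ in $K$; that is, for any two cosets $Hx, Hy$ of $H$ contained in $K$, the number of $G$-conjugacy classes contained in $Hx$ with centralizing subgroup $K$ equals the number of $G$-conjugacy classes contained in $Hy$ with centralizing subgroup $K$.
   Context: For $g\in G$, the centralizing subgroup of $g$ with respect to $H$ is $\Delta_g = HC_G(g)$, the subgroup generated by $H$ and the centralizer $C_G(g)$. For a conjugacy class $X$ of $G$, its centralizing subgroup is $\Delta_X=\Delta_g$ for any $g\in X$ (this is independent of the choice of $g$). Since $G/H$ is abelian, each $G$-conjugacy class lies in a single coset of $H$. *)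

theory Defs
  imports "HOL-Algebra.Algebra"
begin

definition centralizer_elt :: "('a, 'b) monoid_scheme \<Rightarrow> 'a \<Rightarrow> 'a set" where
  "centralizer_elt G g = {c \<in> carrier G. c \<otimes>\<^bsub>G\<^esub> g = g \<otimes>\<^bsub>G\<^esub> c}"

definition conj_class :: "('a, 'b) monoid_scheme \<Rightarrow> 'a \<Rightarrow> 'a set" where
  "conj_class G g = {h \<otimes>\<^bsub>G\<^esub> g \<otimes>\<^bsub>G\<^esub> inv\<^bsub>G\<^esub> h | h. h \<in> carrier G}"

definition conj_classes :: "('a, 'b) monoid_scheme \<Rightarrow> 'a set set" where
  "conj_classes G = conj_class G ` carrier G"

definition centralizing_subgroup :: "('a, 'b) monoid_scheme \<Rightarrow> 'a set \<Rightarrow> 'a \<Rightarrow> 'a set" where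
  "centralizing_subgroup G H g = generate G (H \<union> centralizer_elt G g)"

text \<open>Centralizing subgroup of a conjugacy class X: that of any representative (well defined
  when H is normal; we pick one with SOME).\<close>
definition centralizing_subgroup_class :: "('a, 'b) monoid_scheme \<Rightarrow> 'a set \<Rightarrow> 'a set \<Rightarrow> 'a set" where
  "centralizing_subgroup_class G H C = centralizing_subgroup G H (SOME g. g \<in> C)"

end

theory Submission
  imports Defs
begin


locale ctx = normal +
  assumes fin: "finite (carrier G)" and cyc: "cyclic_group (G Mod H)"
begin

lemma rcos_mem: "z \<in> H #> m \<longleftrightarrow> (\<exists>h\<in>H. z = h \<otimes> m)"
  unfolding r_coset_def by auto

lemma comm_quot:
  assumes a: "a \<in> carrier G" and m: "m \<in> carrier G"
  shows "\<exists>h\<in>H. inv a \<otimes> m \<otimes> a = h \<otimes> m"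
proof -
  interpret Q: group "G Mod H" by (rule factorgroup_is_group)
  interpret Q: comm_group "G Mod H" using Q.cyclic_imp_abelian_group[OF cyc] .
  define p where "p = inv a \<otimes> m"
  have p: "p \<in> carrier G" using a m p_def by simp
  have "H #> p \<in> carrier (G Mod H)" "H #> a \<in> carrier (G Mod H)"
    using p a by (auto simp: FactGroup_def intro: rcosetsI)
  hence "(H #> p) \<otimes>\<^bsub>G Mod H\<^esub> (H #> a) = (H #> a) \<otimes>\<^bsub>G Mod H\<^esub> (H #> p)"
    using Q.m_comm by blast
  hence "H #> (p \<otimes> a) = H #> (a \<otimes> p)"
    using rcos_sum p a by (simp add: FactGroup_def)
  moreover have "a \<otimes> p = m" using a m p_def by (simp add: m_assoc[symmetric])
  moreover have "p \<otimes> a \<in> H #> (p \<otimes> a)" using p a by (simp add: rcos_self is_subgroup)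
  ultimately have "p \<otimes> a \<in> H #> m" by simp
  thus ?thesis unfolding p_def rcos_mem .
qed

lemma conj_coset:
  assumes a: "a \<in> carrier G" and g: "g \<in> carrier G"
  shows "a \<otimes> g \<otimes> inv a \<in> H #> g"
  using comm_quot[of "inv a" g] a g by (auto simp: rcos_mem)

lemma Z_subgroup: "g \<in> carrier G \<Longrightarrow> subgroup (centralizer_elt G g) G"
proof (rule subgroupI)
  assume g: "g \<in> carrier G"
  show "centralizer_elt G g \<subseteq> carrier G" unfolding centralizer_elt_def by auto
  show "centralizer_elt G g \<noteq> {}" using g unfolding centralizer_elt_def by (auto intro!: exI[of _ \<one>])
  fix c assume c: "c \<in> centralizer_elt G g"
  hence c1: "c \<in> carrier G" and c2: "c \<otimes> g = g \<otimes> c" unfolding centralizer_elt_def by auto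
  have "inv c \<otimes> g = inv c \<otimes> (g \<otimes> c) \<otimes> inv c" using c1 g by (simp add: m_assoc)
  also have "\<dots> = inv c \<otimes> (c \<otimes> g) \<otimes> inv c" using c2 by simp
  also have "\<dots> = g \<otimes> inv c" using c1 g by (simp add: m_assoc[symmetric])
  finally show "inv c \<in> centralizer_elt G g" using c1 unfolding centralizer_elt_def by auto
  fix d assume d: "d \<in> centralizer_elt G g"
  hence d1: "d \<in> carrier G" and d2: "d \<otimes> g = g \<otimes> d" unfolding centralizer_elt_def by auto
  have "c \<otimes> d \<otimes> g = c \<otimes> (d \<otimes> g)" using c1 d1 g by (simp add: m_assoc)
  also have "\<dots> = (c \<otimes> g) \<otimes> d" using d2 c1 d1 g by (simp add: m_assoc)
  also have "\<dots> = g \<otimes> (c \<otimes> d)" using c2 c1 d1 g by (simp add: m_assoc)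
  finally show "c \<otimes> d \<in> centralizer_elt G g" using c1 d1 unfolding centralizer_elt_def by auto
qed

lemma lc1[simp]: "x \<in> carrier G \<Longrightarrow> y \<in> carrier G \<Longrightarrow> inv x \<otimes> (x \<otimes> y) = y"
  by (simp add: m_assoc[symmetric])
lemma lc2[simp]: "x \<in> carrier G \<Longrightarrow> y \<in> carrier G \<Longrightarrow> x \<otimes> (inv x \<otimes> y) = y"
  by (simp add: m_assoc[symmetric])

lemma Hc: "h \<in> H \<Longrightarrow> h \<in> carrier G" using subset by blast

lemma Zc: "c \<in> centralizer_elt G g \<Longrightarrow> c \<in> carrier G"
  unfolding centralizer_elt_def by auto

lemma ZI: "c \<in> carrier G \<Longrightarrow> c \<otimes> g = g \<otimes> c \<Longrightarrow> c \<in> centralizer_elt G g"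
  unfolding centralizer_elt_def by auto

lemma ZD: "c \<in> centralizer_elt G g \<Longrightarrow> c \<otimes> g = g \<otimes> c"
  unfolding centralizer_elt_def by auto

lemma norm1: "x \<in> carrier G \<Longrightarrow> h \<in> H \<Longrightarrow> x \<otimes> h \<otimes> inv x \<in> H"
  using normal_inv_iff is_group normal_axioms by blast

lemma norm2: "x \<in> carrier G \<Longrightarrow> h \<in> H \<Longrightarrow> inv x \<otimes> h \<otimes> x \<in> H"
  using norm1[of "inv x" h] by simp

definition Tset where "Tset g = {m \<in> carrier G. \<exists>h\<in>H. h \<otimes> m \<in> centralizer_elt G g}"

lemma T_subgroup: assumes g: "g \<in> carrier G" shows "subgroup (Tset g) G"
proof (rule subgroupI)
  interpret Z: subgroup "centralizer_elt G g" G using Z_subgroup[OF g] .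
  show "Tset g \<subseteq> carrier G" unfolding Tset_def by auto
  show "Tset g \<noteq> {}" unfolding Tset_def by (auto intro!: exI[of _ \<one>] bexI[of _ \<one>])
  fix m assume "m \<in> Tset g"
  then obtain h where m: "m \<in> carrier G" and h: "h \<in> H" and hm: "h \<otimes> m \<in> centralizer_elt G g"
    unfolding Tset_def by auto
  have hc: "h \<in> carrier G" using Hc h .
  have "inv (h \<otimes> m) \<in> centralizer_elt G g" using hm by simp
  moreover have "inv (h \<otimes> m) = (inv m \<otimes> inv h \<otimes> m) \<otimes> inv m"
    using hc m by (simp add: inv_mult_group m_assoc)
  moreover have "inv m \<otimes> inv h \<otimes> m \<in> H" using norm2[OF m, of "inv h"] h by simp
  ultimately show "inv m \<in> Tset g" unfolding Tset_def using m by auto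
  fix n assume "n \<in> Tset g"
  then obtain k where n: "n \<in> carrier G" and k: "k \<in> H" and kn: "k \<otimes> n \<in> centralizer_elt G g"
    unfolding Tset_def by auto
  have kc: "k \<in> carrier G" using Hc k .
  have "(h \<otimes> m) \<otimes> (k \<otimes> n) \<in> centralizer_elt G g" using hm kn by simp
  moreover have "(h \<otimes> m) \<otimes> (k \<otimes> n) = (h \<otimes> (m \<otimes> k \<otimes> inv m)) \<otimes> (m \<otimes> n)"
    using hc m kc n by (simp add: m_assoc)
  moreover have "h \<otimes> (m \<otimes> k \<otimes> inv m) \<in> H" using norm1[OF m k] h by simp
  ultimately show "m \<otimes> n \<in> Tset g" unfolding Tset_def using m n by auto
qed

lemma Dchar: assumes g: "g \<in> carrier G" shows "centralizing_subgroup G H g = Tset g"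
  unfolding centralizing_subgroup_def
proof (rule generateI[OF T_subgroup[OF g], symmetric])
  show "H \<union> centralizer_elt G g \<subseteq> Tset g"
  proof
    fix x assume "x \<in> H \<union> centralizer_elt G g"
    then show "x \<in> Tset g"
    proof
      assume x: "x \<in> H"
      have "inv x \<otimes> x \<in> centralizer_elt G g" using Hc[OF x] g by (simp add: ZI)
      thus ?thesis unfolding Tset_def using x Hc[OF x] by (auto intro!: bexI[of _ "inv x"])
    next
      assume x: "x \<in> centralizer_elt G g"
      thus ?thesis unfolding Tset_def using Zc[OF x] by (auto intro!: bexI[of _ \<one>])
    qed
  qed
  fix K assume K: "subgroup K G" "H \<union> centralizer_elt G g \<subseteq> K"
  show "Tset g \<subseteq> K"
  proof
    fix m assume "m \<in> Tset g"
    then obtain h where m: "m \<in> carrier G" and h: "h \<in> H" and hm: "h \<otimes> m \<in> centralizer_elt G g"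
      unfolding Tset_def by auto
    have "inv h \<otimes> (h \<otimes> m) \<in> K" using K h hm by (meson UnCI subgroup.m_closed subgroup.m_inv_closed subsetD)
    thus "m \<in> K" using Hc[OF h] m by (simp add: m_assoc[symmetric])
  qed
qed

lemma D_props: assumes g: "g \<in> carrier G"
  shows "subgroup (centralizing_subgroup G H g) G" "H \<subseteq> centralizing_subgroup G H g"
    "centralizer_elt G g \<subseteq> centralizing_subgroup G H g"
  unfolding centralizing_subgroup_def
  using generate_is_subgroup[of "H \<union> centralizer_elt G g"] generate.incl[of _ "H \<union> centralizer_elt G g" G]
   subset by (auto dest: Zc)

lemma Z_conj: assumes a: "a \<in> carrier G" and g: "g \<in> carrier G"
  and c: "c \<in> centralizer_elt G (a \<otimes> g \<otimes> inv a)"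
  shows "inv a \<otimes> c \<otimes> a \<in> centralizer_elt G g"
proof -
  have cc: "c \<in> carrier G" using Zc[OF c] .
  have e: "c \<otimes> (a \<otimes> g \<otimes> inv a) = (a \<otimes> g \<otimes> inv a) \<otimes> c" using ZD[OF c] .
  have "(inv a \<otimes> c \<otimes> a) \<otimes> g = inv a \<otimes> (c \<otimes> (a \<otimes> g \<otimes> inv a)) \<otimes> a"
    using a g cc by (simp add: m_assoc)
  also have "\<dots> = inv a \<otimes> ((a \<otimes> g \<otimes> inv a) \<otimes> c) \<otimes> a" using e by simp
  also have "\<dots> = g \<otimes> (inv a \<otimes> c \<otimes> a)" using a g cc by (simp add: m_assoc[symmetric])
  finally show ?thesis using a cc by (intro ZI) auto
qed

lemma D_conj_sub: assumes a: "a \<in> carrier G" and g: "g \<in> carrier G"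
  shows "centralizing_subgroup G H (a \<otimes> g \<otimes> inv a) \<subseteq> centralizing_subgroup G H g"
proof
  fix m assume "m \<in> centralizing_subgroup G H (a \<otimes> g \<otimes> inv a)"
  then obtain h where m: "m \<in> carrier G" and h: "h \<in> H"
    and hm: "h \<otimes> m \<in> centralizer_elt G (a \<otimes> g \<otimes> inv a)"
    using Dchar[of "a \<otimes> g \<otimes> inv a"] a g unfolding Tset_def by auto
  have hc: "h \<in> carrier G" using Hc[OF h] .
  have z: "inv a \<otimes> (h \<otimes> m) \<otimes> a \<in> centralizer_elt G g" using Z_conj[OF a g hm] .
  obtain h2 where h2: "h2 \<in> H" "inv a \<otimes> m \<otimes> a = h2 \<otimes> m" using comm_quot[OF a m] by auto
  have "inv a \<otimes> (h \<otimes> m) \<otimes> a = (inv a \<otimes> h \<otimes> a) \<otimes> (inv a \<otimes> m \<otimes> a)"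
    using a hc m by (simp add: m_assoc)
  also have "\<dots> = ((inv a \<otimes> h \<otimes> a) \<otimes> h2) \<otimes> m" using h2 a hc m Hc[OF h2(1)] by (simp add: m_assoc)
  finally have "((inv a \<otimes> h \<otimes> a) \<otimes> h2) \<otimes> m \<in> centralizer_elt G g" using z by simp
  moreover have "(inv a \<otimes> h \<otimes> a) \<otimes> h2 \<in> H" using norm2[OF a h] h2 by simp
  ultimately show "m \<in> centralizing_subgroup G H g" using Dchar[OF g] m unfolding Tset_def by auto
qed

lemma D_conj: assumes a: "a \<in> carrier G" and g: "g \<in> carrier G"
  shows "centralizing_subgroup G H (a \<otimes> g \<otimes> inv a) = centralizing_subgroup G H g"
proof
  show "centralizing_subgroup G H (a \<otimes> g \<otimes> inv a) \<subseteq> centralizing_subgroup G H g"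
    using D_conj_sub[OF a g] .
  have "inv a \<otimes> (a \<otimes> g \<otimes> inv a) \<otimes> inv (inv a) = g" using a g by (simp add: m_assoc)
  thus "centralizing_subgroup G H g \<subseteq> centralizing_subgroup G H (a \<otimes> g \<otimes> inv a)"
    using D_conj_sub[of "inv a" "a \<otimes> g \<otimes> inv a"] a g by simp
qed

lemma F1_empty: assumes g: "g \<in> carrier G" and m: "m \<in> carrier G"
  and nm: "m \<notin> centralizing_subgroup G H g"
  shows "centralizer_elt G g \<inter> (H #> m) = {}"
  using nm m unfolding Dchar[OF g] Tset_def by (auto simp: rcos_mem)

lemma F1_card: assumes g: "g \<in> carrier G" and m: "m \<in> centralizing_subgroup G H g"
  shows "card (centralizer_elt G g \<inter> (H #> m)) = card (H \<inter> centralizer_elt G g)"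
proof -
  interpret Z: subgroup "centralizer_elt G g" G using Z_subgroup[OF g] .
  obtain h0 where mc: "m \<in> carrier G" and h0: "h0 \<in> H" and z0: "h0 \<otimes> m \<in> centralizer_elt G g"
    using m unfolding Dchar[OF g] Tset_def by auto
  have h0c: "h0 \<in> carrier G" using Hc[OF h0] .
  define z where "z = h0 \<otimes> m"
  have zc: "z \<in> carrier G" using z_def h0c mc by simp
  have "bij_betw (\<lambda>u. u \<otimes> z) (H \<inter> centralizer_elt G g) (centralizer_elt G g \<inter> (H #> m))"
  proof (rule bij_betw_byWitness[where f' = "\<lambda>w. w \<otimes> inv z"])
    show "\<forall>u\<in>H \<inter> centralizer_elt G g. u \<otimes> z \<otimes> inv z = u" using zc by (auto simp: m_assoc dest: Hc)
    show "\<forall>w\<in>centralizer_elt G g \<inter> (H #> m). w \<otimes> inv z \<otimes> z = w"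
    proof
      fix w assume "w \<in> centralizer_elt G g \<inter> (H #> m)"
      hence "w \<in> carrier G" using Zc by blast
      thus "w \<otimes> inv z \<otimes> z = w" using zc by (simp add: m_assoc)
    qed
    show "(\<lambda>u. u \<otimes> z) ` (H \<inter> centralizer_elt G g) \<subseteq> centralizer_elt G g \<inter> (H #> m)"
    proof clarify
      fix u assume u: "u \<in> H" "u \<in> centralizer_elt G g"
      have "u \<otimes> z \<in> centralizer_elt G g" using u z0 z_def by simp
      moreover have "u \<otimes> z = (u \<otimes> h0) \<otimes> m" using z_def Hc[OF u(1)] h0c mc by (simp add: m_assoc)
      moreover have "u \<otimes> h0 \<in> H" using u h0 by simp
      ultimately show "u \<otimes> z \<in> centralizer_elt G g \<inter> (H #> m)" by (auto simp: rcos_mem)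
    qed
    show "(\<lambda>w. w \<otimes> inv z) ` (centralizer_elt G g \<inter> (H #> m)) \<subseteq> H \<inter> centralizer_elt G g"
    proof clarify
      fix w assume w: "w \<in> centralizer_elt G g" "w \<in> H #> m"
      then obtain h where h: "h \<in> H" "w = h \<otimes> m" unfolding rcos_mem by auto
      have "w \<otimes> inv z \<in> centralizer_elt G g" using w z0 z_def by simp
      moreover have "w \<otimes> inv z = h \<otimes> inv h0" using h z_def Hc[OF h(1)] h0c mc
        by (simp add: inv_mult_group m_assoc)
      moreover have "h \<otimes> inv h0 \<in> H" using h h0 by simp
      ultimately show "w \<otimes> inv z \<in> H \<inter> centralizer_elt G g" by simp
    qed
  qed
  thus ?thesis by (simp add: bij_betw_same_card)
qed

end



lemma int_subgroup_principal:
  fixes N :: "int set"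
  assumes z: "0 \<in> N" and sub: "\<And>a b. a \<in> N \<Longrightarrow> b \<in> N \<Longrightarrow> a - b \<in> N"
  shows "\<exists>d\<in>N. \<forall>n\<in>N. d dvd n"
proof (cases "N \<subseteq> {0}")
  case True thus ?thesis using z by auto
next
  case False
  then obtain n where n: "n \<in> N" "n \<noteq> 0" by auto
  have neg: "a \<in> N \<Longrightarrow> - a \<in> N" for a using sub[OF z, of a] by simp
  have add: "a \<in> N \<Longrightarrow> b \<in> N \<Longrightarrow> a + b \<in> N" for a b using sub[of a "- b"] neg[of b] by simp
  have "\<exists>k::nat. k > 0 \<and> int k \<in> N"
  proof (cases "n > 0")
    case True thus ?thesis using n by (intro exI[of _ "nat n"]) auto
  next
    case False thus ?thesis using n neg[OF n(1)] by (intro exI[of _ "nat (- n)"]) auto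
  qed
  define k where "k = (LEAST k::nat. k > 0 \<and> int k \<in> N)"
  have k: "k > 0" "int k \<in> N" using LeastI_ex[OF \<open>\<exists>k::nat. k > 0 \<and> int k \<in> N\<close>] k_def by auto
  have mult: "int k * q \<in> N" for q
  proof (induct q rule: int_induct[where k=0])
    case base then show ?case using z by simp
  next
    case (step1 i) then show ?case using add[OF _ k(2)] by (simp add: distrib_left)
  next
    case (step2 i) then show ?case using sub[OF _ k(2)] by (simp add: right_diff_distrib)
  qed
  show ?thesis
  proof (intro bexI[OF _ k(2)] ballI)
    fix m assume m: "m \<in> N"
    have "m mod int k = m - int k * (m div int k)" by (simp add: minus_div_mult_eq_mod[symmetric] mult.commute)
    hence r: "m mod int k \<in> N" using sub[OF m mult] by simp
    have r0: "0 \<le> m mod int k" "m mod int k < int k" using k(1) by auto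
    show "int k dvd m"
    proof (rule ccontr)
      assume "\<not> int k dvd m"
      hence "m mod int k > 0" using r0 by (simp add: dvd_eq_mod_eq_0 order_le_neq_trans)
      hence "nat (m mod int k) > 0 \<and> int (nat (m mod int k)) \<in> N" using r by simp
      hence "k \<le> nat (m mod int k)" unfolding k_def by (rule Least_le)
      thus False using r0 by simp
    qed
  qed
qed

context ctx begin

lemma generator:
  assumes K: "subgroup K G" and HK: "H \<subseteq> K"
  shows "\<exists>l\<in>K. \<forall>x\<in>K. \<exists>q::int. \<exists>h\<in>H. x = h \<otimes> l [^] q"
proof -
  interpret Q: group "G Mod H" by (rule factorgroup_is_group)
  obtain Xg where X: "Xg \<in> carrier (G Mod H)" and XQ: "carrier (G Mod H) = range (\<lambda>n::int. Xg [^]\<^bsub>G Mod H\<^esub> n)"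
    using cyc Q.cyclic_group by auto
  obtain g0 where g0: "g0 \<in> carrier G" "Xg = H #> g0" using X by (auto simp: FactGroup_def RCOSETS_def)
  have hom: "group_hom G (G Mod H) (\<lambda>a. H #> a)"
    using r_coset_hom_Mod by (simp add: group_hom_def group_hom_axioms_def is_group Q.is_group)
  have rep: "\<exists>n::int. \<exists>h\<in>H. x = h \<otimes> g0 [^] n" if x: "x \<in> carrier G" for x
  proof -
    have "H #> x \<in> carrier (G Mod H)" using x by (auto simp: FactGroup_def intro: rcosetsI)
    then obtain n :: int where "H #> x = Xg [^]\<^bsub>G Mod H\<^esub> n" using XQ by auto
    also have "\<dots> = H #> (g0 [^] n)" using group_hom.hom_int_pow[OF hom g0(1)] g0(2) by simp
    finally have "x \<in> H #> (g0 [^] n)" using rcos_self[OF x is_subgroup] by simp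
    thus ?thesis unfolding rcos_mem by auto
  qed
  define N where "N = {n::int. g0 [^] n \<in> K}"
  have "0 \<in> N" unfolding N_def using subgroup.one_closed[OF K] by simp
  moreover have "a - b \<in> N" if "a \<in> N" "b \<in> N" for a b
    using that g0(1) unfolding N_def
    by (simp add: int_pow_diff[OF g0(1)] subgroup.m_closed[OF K] subgroup.m_inv_closed[OF K])
  ultimately obtain d where d: "d \<in> N" "\<forall>n\<in>N. d dvd n" using int_subgroup_principal by metis
  show ?thesis
  proof (intro bexI ballI)
    show "g0 [^] d \<in> K" using d N_def by simp
    fix x assume xK: "x \<in> K"
    hence x: "x \<in> carrier G" using subgroup.subset[OF K] by auto
    obtain n :: int where "\<exists>h\<in>H. x = h \<otimes> g0 [^] n" using rep[OF x] by (elim exE)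
    then obtain h where h: "h \<in> H" and xe: "x = h \<otimes> g0 [^] n" by (elim bexE)
    have "inv h \<otimes> x = g0 [^] n" using xe Hc[OF h] g0(1) by simp
    moreover have "inv h \<otimes> x \<in> K" using xK h HK K by (meson subgroup.m_closed subgroup.m_inv_closed subsetD)
    ultimately have "n \<in> N" unfolding N_def by simp
    then obtain q where "n = d * q" using d by (auto elim: dvdE)
    hence "g0 [^] n = (g0 [^] d) [^] q" using int_pow_pow[OF g0(1)] by simp
    thus "\<exists>q::int. \<exists>h\<in>H. x = h \<otimes> (g0 [^] d) [^] q" using xe h by auto
  qed
qed

end


context ctx begin
abbreviation "Dl g \<equiv> centralizing_subgroup G H g"
definition cH where "cH g = card (H \<inter> centralizer_elt G g)"
lemma cosetc: "x \<in> carrier G \<Longrightarrow> H #> x \<subseteq> carrier G"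
  using r_coset_subset_G subset by blast
lemma finc: "A \<subseteq> carrier G \<Longrightarrow> finite A" using fin finite_subset by blast
lemma card_Z_filter:
  assumes A: "A \<subseteq> carrier G"
  shows "card (centralizer_elt G g \<inter> A) = (\<Sum>b\<in>A. if g \<otimes> b = b \<otimes> g then 1 else 0)"
proof -
  have "centralizer_elt G g \<inter> A = {b\<in>A. g \<otimes> b = b \<otimes> g}"
    using A unfolding centralizer_elt_def by auto
  moreover have "card {b\<in>A. g \<otimes> b = b \<otimes> g} = (\<Sum>b\<in>{b\<in>A. g \<otimes> b = b \<otimes> g}. 1)"
    by (rule card_eq_sum)
  moreover have "\<dots> = (\<Sum>b\<in>A. if g \<otimes> b = b \<otimes> g then 1 else 0)"
    by (rule sum.inter_filter) (rule finc[OF A])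
  ultimately show ?thesis by simp
qed

lemma l_in_D:
  assumes b: "b \<in> H #> l" and l: "l \<in> carrier G"
  shows "l \<in> Dl b"
proof (rule ccontr)
  have bc: "b \<in> carrier G" using b cosetc[OF l] by auto
  assume "l \<notin> Dl b"
  hence "centralizer_elt G b \<inter> (H #> l) = {}" using F1_empty[OF bc l] by simp
  moreover have "b \<in> centralizer_elt G b" using bc by (simp add: ZI)
  ultimately show False using b by auto
qed

lemma S_indep:
  assumes K: "subgroup K G" and HK: "H \<subseteq> K" and x: "x \<in> K" and y: "y \<in> K"
  shows "(\<Sum>g\<in>{g\<in>H #> x. K \<subseteq> Dl g}. cH g) = (\<Sum>g\<in>{g\<in>H #> y. K \<subseteq> Dl g}. cH g)"
proof -
  obtain l where lK: "l \<in> K" and gen: "\<forall>x\<in>K. \<exists>q::int. \<exists>h\<in>H. x = h \<otimes> l [^] q"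
    using generator[OF K HK] by blast
  have Kc: "K \<subseteq> carrier G" using subgroup.subset[OF K] .
  have lc: "l \<in> carrier G" using lK Kc by auto
  have iff: "K \<subseteq> Dl g \<longleftrightarrow> l \<in> Dl g" if g: "g \<in> carrier G" for g
  proof
    assume "l \<in> Dl g"
    show "K \<subseteq> Dl g"
    proof
      fix z assume "z \<in> K"
      then obtain q :: int where "\<exists>h\<in>H. z = h \<otimes> l [^] q" using gen by (meson bspec)
      then obtain h where "h \<in> H" "z = h \<otimes> l [^] q" by (elim bexE)
      moreover have "l [^] q \<in> Dl g" using subgroup_int_pow_closed[OF D_props(1)[OF g] \<open>l \<in> Dl g\<close>] .
      ultimately show "z \<in> Dl g" using D_props[OF g] by (meson subgroup.m_closed subsetD)
    qed
  next
    assume "K \<subseteq> Dl g" thus "l \<in> Dl g" using lK by blast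
  qed
  have main: "(\<Sum>g\<in>{g\<in>H #> z. K \<subseteq> Dl g}. cH g) = (\<Sum>b\<in>H #> l. cH b)" if z: "z \<in> K" for z
  proof -
    have zc: "z \<in> carrier G" using z Kc by auto
    have "(\<Sum>g\<in>{g\<in>H #> z. K \<subseteq> Dl g}. cH g) = (\<Sum>g\<in>H #> z. if K \<subseteq> Dl g then cH g else 0)"
      by (rule sum.inter_filter) (rule finc[OF cosetc[OF zc]])
    also have "\<dots> = (\<Sum>g\<in>H #> z. card (centralizer_elt G g \<inter> (H #> l)))"
    proof (rule sum.cong[OF refl])
      fix g assume "g \<in> H #> z"
      hence g: "g \<in> carrier G" using cosetc[OF zc] by auto
      show "(if K \<subseteq> Dl g then cH g else 0) = card (centralizer_elt G g \<inter> (H #> l))"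
      proof (cases "l \<in> Dl g")
        case True thus ?thesis using iff[OF g] F1_card[OF g True] unfolding cH_def by simp
      next
        case False thus ?thesis using iff[OF g] F1_empty[OF g lc False] by simp
      qed
    qed
    also have "\<dots> = (\<Sum>g\<in>H #> z. \<Sum>b\<in>H #> l. if g \<otimes> b = b \<otimes> g then 1 else 0)"
      using card_Z_filter[OF cosetc[OF lc]] by simp
    also have "\<dots> = (\<Sum>b\<in>H #> l. \<Sum>g\<in>H #> z. if g \<otimes> b = b \<otimes> g then 1 else 0)"
      by (rule sum.swap)
    also have "\<dots> = (\<Sum>b\<in>H #> l. card (centralizer_elt G b \<inter> (H #> z)))"
      using card_Z_filter[OF cosetc[OF zc]] by (simp add: eq_commute)
    also have "\<dots> = (\<Sum>b\<in>H #> l. cH b)"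
    proof (rule sum.cong[OF refl])
      fix b assume b: "b \<in> H #> l"
      hence bc: "b \<in> carrier G" using cosetc[OF lc] by auto
      have "z \<in> Dl b" using iff[OF bc] l_in_D[OF b lc] z by blast
      thus "card (centralizer_elt G b \<inter> (H #> z)) = cH b" using F1_card[OF bc] unfolding cH_def by simp
    qed
    finally show ?thesis .
  qed
  show ?thesis using main[OF x] main[OF y] by simp
qed

definition Eset where "Eset x M = (\<Sum>g\<in>{g\<in>H #> x. Dl g = M}. cH g)"

lemma finT: "finite {M. K \<subseteq> M \<and> M \<subseteq> carrier G}"
  by (rule finite_subset[of _ "Pow (carrier G)"]) (auto simp: fin)

lemma grouping:
  assumes x: "x \<in> carrier G"
  shows "(\<Sum>g\<in>{g\<in>H #> x. K \<subseteq> Dl g}. cH g) = (\<Sum>M\<in>{M. K \<subseteq> M \<and> M \<subseteq> carrier G}. Eset x M)"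
proof -
  let ?S = "{g\<in>H #> x. K \<subseteq> Dl g}"
  let ?T = "{M. K \<subseteq> M \<and> M \<subseteq> carrier G}"
  have fS: "finite ?S" by (rule finite_subset[OF _ finc[OF cosetc[OF x]]]) auto
  have im: "Dl ` ?S \<subseteq> ?T"
  proof
    fix M assume "M \<in> Dl ` ?S"
    then obtain g where g: "g \<in> H #> x" "K \<subseteq> Dl g" and M: "M = Dl g" by auto
    have gc: "g \<in> carrier G" using g(1) cosetc[OF x] by auto
    have "Dl g \<subseteq> carrier G" using subgroup.subset[OF D_props(1)[OF gc]] .
    thus "M \<in> ?T" using g M by simp
  qed
  have "(\<Sum>g\<in>?S. cH g) = (\<Sum>M\<in>?T. sum cH {g\<in>?S. Dl g = M})"
    by (rule sum.group[OF fS finT im, symmetric])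
  also have "\<dots> = (\<Sum>M\<in>?T. Eset x M)"
  proof (rule sum.cong[OF refl])
    fix M assume "M \<in> ?T"
    hence "{g\<in>?S. Dl g = M} = {g\<in>H #> x. Dl g = M}" by auto
    thus "sum cH {g\<in>?S. Dl g = M} = Eset x M" unfolding Eset_def by simp
  qed
  finally show ?thesis .
qed

lemma E_indep:
  "M \<subseteq> carrier G \<Longrightarrow> x \<in> M \<Longrightarrow> y \<in> M \<Longrightarrow> Eset x M = Eset y M"
proof (induction M arbitrary: x y rule: measure_induct_rule[where f = "\<lambda>M. card (carrier G) - card M"])
  case (less M)
  show ?case
  proof (cases "subgroup M G \<and> H \<subseteq> M")
    case False
    have empty: "{g\<in>H #> z. Dl g = M} = {}" if z: "z \<in> carrier G" for z
    proof -
      { fix g assume g: "g \<in> H #> z" "Dl g = M"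
        have gc: "g \<in> carrier G" using g(1) cosetc[OF z] by auto
        have "subgroup M G \<and> H \<subseteq> M" using D_props(1,2)[OF gc] g(2) by simp
        hence False using False by simp }
      thus ?thesis by auto
    qed
    have "x \<in> carrier G" "y \<in> carrier G" using less.prems by auto
    hence ex: "{g\<in>H #> x. Dl g = M} = {}" and ey: "{g\<in>H #> y. Dl g = M} = {}" using empty by blast+
    show ?thesis unfolding Eset_def ex ey by (rule refl)
  next
    case True
    let ?T = "{M'. M \<subseteq> M' \<and> M' \<subseteq> carrier G}"
    have MT: "M \<in> ?T" using less.prems by auto
    have xc: "x \<in> carrier G" "y \<in> carrier G" using less.prems by auto
    have S: "(\<Sum>g\<in>{g\<in>H #> x. M \<subseteq> Dl g}. cH g) = (\<Sum>g\<in>{g\<in>H #> y. M \<subseteq> Dl g}. cH g)"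
      using S_indep[OF conjunct1[OF True] conjunct2[OF True] less.prems(2) less.prems(3)] .
    have "(\<Sum>M'\<in>?T. Eset x M') = (\<Sum>g\<in>{g\<in>H #> x. M \<subseteq> Dl g}. cH g)"
      by (rule grouping[OF xc(1), symmetric])
    also have "\<dots> = (\<Sum>g\<in>{g\<in>H #> y. M \<subseteq> Dl g}. cH g)" by (rule S)
    also have "\<dots> = (\<Sum>M'\<in>?T. Eset y M')" by (rule grouping[OF xc(2)])
    finally have eq: "(\<Sum>M'\<in>?T. Eset x M') = (\<Sum>M'\<in>?T. Eset y M')" .
    have rest: "(\<Sum>M'\<in>?T - {M}. Eset x M') = (\<Sum>M'\<in>?T - {M}. Eset y M')"
    proof (rule sum.cong[OF refl])
      fix M' assume M': "M' \<in> ?T - {M}"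
      hence M1: "M \<subseteq> M'" "M' \<noteq> M" "M' \<subseteq> carrier G" by simp_all
      hence sub: "M \<subset> M'" "M' \<subseteq> carrier G" by blast+
      have "card M < card M'" using psubset_card_mono[OF finc[OF sub(2)] sub(1)] .
      moreover have "card M' \<le> card (carrier G)" using card_mono[OF fin sub(2)] .
      ultimately have lt: "card (carrier G) - card M' < card (carrier G) - card M" by linarith
      have xM: "x \<in> M'" and yM: "y \<in> M'" using sub(1) less.prems(2,3) by auto
      show "Eset x M' = Eset y M'" by (rule less.IH[OF lt sub(2) xM yM])
    qed
    have "Eset x M + (\<Sum>M'\<in>?T - {M}. Eset x M') = Eset y M + (\<Sum>M'\<in>?T - {M}. Eset y M')"
      using eq unfolding sum.remove[OF finT MT, of "Eset x"] sum.remove[OF finT MT, of "Eset y"] .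
    thus ?thesis unfolding rest by (rule add_right_imp_eq)
  qed
qed

end


context ctx begin

lemma conj_eq_iff: "a \<in> carrier G \<Longrightarrow> g \<in> carrier G \<Longrightarrow> (a \<otimes> g \<otimes> inv a = g) = (a \<otimes> g = g \<otimes> a)"
proof
  assume a: "a \<in> carrier G" and g: "g \<in> carrier G" and e: "a \<otimes> g \<otimes> inv a = g"
  have "a \<otimes> g = (a \<otimes> g \<otimes> inv a) \<otimes> a" using a g by (simp add: m_assoc)
  thus "a \<otimes> g = g \<otimes> a" using e by simp
next
  assume a: "a \<in> carrier G" and g: "g \<in> carrier G" and e: "a \<otimes> g = g \<otimes> a"
  have "a \<otimes> g \<otimes> inv a = g \<otimes> a \<otimes> inv a" using e by simp
  thus "a \<otimes> g \<otimes> inv a = g" using a g by (simp add: m_assoc)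
qed

lemma OS: assumes g: "g \<in> carrier G"
  shows "card (conj_class G g) * card (centralizer_elt G g) = order G"
proof -
  interpret A: group_action G "carrier G" "\<lambda>a. \<lambda>h\<in>carrier G. a \<otimes> h \<otimes> inv a"
    by (rule action_by_conjugation)
  have o: "orbit G (\<lambda>a. \<lambda>h\<in>carrier G. a \<otimes> h \<otimes> inv a) g = conj_class G g"
    unfolding orbit_def conj_class_def using g by auto
  have s: "stabilizer G (\<lambda>a. \<lambda>h\<in>carrier G. a \<otimes> h \<otimes> inv a) g = centralizer_elt G g"
    unfolding stabilizer_def centralizer_elt_def using g conj_eq_iff by auto
  show ?thesis using A.orbit_stabilizer_theorem[OF g] unfolding o s .
qed

lemma PF: assumes g: "g \<in> carrier G"
  shows "cH g * card (Dl g) = card H * card (centralizer_elt G g)"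
proof -
  interpret Z: subgroup "centralizer_elt G g" G using Z_subgroup[OF g] .
  have Dc: "Dl g \<subseteq> carrier G" using subgroup.subset[OF D_props(1)[OF g]] .
  have bij: "bij_betw (\<lambda>(h, z). (h \<otimes> z, z)) (H \<times> centralizer_elt G g)
              (Sigma (Dl g) (\<lambda>m. centralizer_elt G g \<inter> (H #> m)))"
  proof (rule bij_betw_byWitness[where f' = "\<lambda>(m, z). (m \<otimes> inv z, z)"])
    show "\<forall>a\<in>H \<times> centralizer_elt G g. (\<lambda>(m, z). (m \<otimes> inv z, z)) ((\<lambda>(h, z). (h \<otimes> z, z)) a) = a"
      by (auto simp: m_assoc dest: Hc Zc)
    show "\<forall>a\<in>Sigma (Dl g) (\<lambda>m. centralizer_elt G g \<inter> (H #> m)).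
            (\<lambda>(h, z). (h \<otimes> z, z)) ((\<lambda>(m, z). (m \<otimes> inv z, z)) a) = a"
      using Dc by (auto simp: m_assoc dest: Zc)
    show "(\<lambda>(h, z). (h \<otimes> z, z)) ` (H \<times> centralizer_elt G g) \<subseteq> Sigma (Dl g) (\<lambda>m. centralizer_elt G g \<inter> (H #> m))"
    proof (rule image_subsetI)
      fix p assume "p \<in> H \<times> centralizer_elt G g"
      then obtain h z where p: "p = (h, z)" and h: "h \<in> H" and z: "z \<in> centralizer_elt G g" by blast
      have hc: "h \<in> carrier G" and zc: "z \<in> carrier G" using Hc[OF h] Zc[OF z] .
      have "inv h \<otimes> (h \<otimes> z) \<in> centralizer_elt G g" using hc zc z by simp
      hence "h \<otimes> z \<in> Dl g" unfolding Dchar[OF g] Tset_def using hc zc h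
        by (auto intro!: bexI[of _ "inv h"])
      moreover have "z \<in> H #> (h \<otimes> z)" unfolding rcos_mem using hc zc h
        by (auto intro!: bexI[of _ "inv h"])
      ultimately show "(\<lambda>(h, z). (h \<otimes> z, z)) p \<in> Sigma (Dl g) (\<lambda>m. centralizer_elt G g \<inter> (H #> m))" using z p by simp
    qed
    show "(\<lambda>(m, z). (m \<otimes> inv z, z)) ` Sigma (Dl g) (\<lambda>m. centralizer_elt G g \<inter> (H #> m)) \<subseteq> H \<times> centralizer_elt G g"
    proof (rule image_subsetI)
      fix p assume "p \<in> Sigma (Dl g) (\<lambda>m. centralizer_elt G g \<inter> (H #> m))"
      then obtain m z where p: "p = (m, z)" and m: "m \<in> Dl g" and z: "z \<in> centralizer_elt G g" and zm: "z \<in> H #> m" by blast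
      obtain h where h: "h \<in> H" "z = h \<otimes> m" using zm unfolding rcos_mem by blast
      have mc: "m \<in> carrier G" using m Dc by auto
      have "m \<otimes> inv z = inv h" using h Hc[OF h(1)] mc by (simp add: inv_mult_group m_assoc)
      thus "(\<lambda>(m, z). (m \<otimes> inv z, z)) p \<in> H \<times> centralizer_elt G g" using h(1) z p by simp
    qed
  qed
  have "card H * card (centralizer_elt G g) = card (H \<times> centralizer_elt G g)"
    by (simp add: card_cartesian_product)
  also have "\<dots> = card (Sigma (Dl g) (\<lambda>m. centralizer_elt G g \<inter> (H #> m)))"
    using bij by (rule bij_betw_same_card)
  also have "\<dots> = (\<Sum>m\<in>Dl g. card (centralizer_elt G g \<inter> (H #> m)))"
    by (rule card_SigmaI) (auto intro: finc[OF Dc] finc)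
  also have "\<dots> = (\<Sum>m\<in>Dl g. cH g)"
    by (rule sum.cong[OF refl]) (simp add: F1_card[OF g] cH_def)
  also have "\<dots> = cH g * card (Dl g)" by simp
  finally show ?thesis by simp
qed

end


context ctx begin

lemma conj_self: "g \<in> carrier G \<Longrightarrow> g \<in> conj_class G g"
  unfolding conj_class_def by (auto intro!: exI[of _ \<one>])

lemma conj_carrier: "g \<in> carrier G \<Longrightarrow> conj_class G g \<subseteq> carrier G"
  unfolding conj_class_def by auto

lemma conj_elem:
  assumes g: "g \<in> carrier G" and g': "g' \<in> conj_class G g"
  shows "conj_class G g' = conj_class G g" "Dl g' = Dl g"
proof -
  obtain c where c: "c \<in> carrier G" and e: "g' = c \<otimes> g \<otimes> inv c" using g' unfolding conj_class_def by auto
  show "Dl g' = Dl g" using D_conj[OF c g] e by simp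
  show "conj_class G g' = conj_class G g"
  proof
    show "conj_class G g' \<subseteq> conj_class G g"
    proof
      fix w assume "w \<in> conj_class G g'"
      then obtain a where a: "a \<in> carrier G" and w: "w = a \<otimes> g' \<otimes> inv a" unfolding conj_class_def by auto
      have "w = (a \<otimes> c) \<otimes> g \<otimes> inv (a \<otimes> c)" using w e a c g by (simp add: m_assoc inv_mult_group)
      thus "w \<in> conj_class G g" unfolding conj_class_def using a c by auto
    qed
    show "conj_class G g \<subseteq> conj_class G g'"
    proof
      fix w assume "w \<in> conj_class G g"
      then obtain a where a: "a \<in> carrier G" and w: "w = a \<otimes> g \<otimes> inv a" unfolding conj_class_def by auto
      have "w = (a \<otimes> inv c) \<otimes> g' \<otimes> inv (a \<otimes> inv c)" using w e a c g by (simp add: m_assoc inv_mult_group)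
      thus "w \<in> conj_class G g'" unfolding conj_class_def using a c by auto
    qed
  qed
qed

lemma class_D: assumes g: "g \<in> carrier G"
  shows "centralizing_subgroup_class G H (conj_class G g) = Dl g"
proof -
  have "(SOME g'. g' \<in> conj_class G g) \<in> conj_class G g" using conj_self[OF g] by (rule someI)
  thus ?thesis unfolding centralizing_subgroup_class_def using conj_elem(2)[OF g] by simp
qed

lemma class_coset: assumes g: "g \<in> carrier G" and x: "x \<in> carrier G"
  shows "conj_class G g \<subseteq> H #> x \<longleftrightarrow> g \<in> H #> x"
proof
  assume "conj_class G g \<subseteq> H #> x" thus "g \<in> H #> x" using conj_self[OF g] by auto
next
  assume gx: "g \<in> H #> x"
  have eq: "H #> x = H #> g" using repr_independence[OF gx x is_subgroup] .
  show "conj_class G g \<subseteq> H #> x"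
  proof
    fix w assume "w \<in> conj_class G g"
    then obtain a where a: "a \<in> carrier G" and w: "w = a \<otimes> g \<otimes> inv a" unfolding conj_class_def by auto
    show "w \<in> H #> x" using conj_coset[OF a g] w eq by simp
  qed
qed

lemma count:
  assumes x: "x \<in> carrier G"
  shows "card {C \<in> conj_classes G. C \<subseteq> H #> x \<and> centralizing_subgroup_class G H C = K} * (card H * order G)
         = card K * Eset x K"
proof -
  let ?C = "{C \<in> conj_classes G. C \<subseteq> H #> x \<and> centralizing_subgroup_class G H C = K}"
  have cls: "\<exists>g\<in>carrier G. C = conj_class G g" if "C \<in> conj_classes G" for C
    using that unfolding conj_classes_def by (simp add: image_iff)
  have clsC: "\<exists>g\<in>carrier G. C = conj_class G g" if "C \<in> ?C" for C
    using that cls by simp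
  have U: "{g\<in>H #> x. Dl g = K} = \<Union> ?C"
  proof
    show "{g\<in>H #> x. Dl g = K} \<subseteq> \<Union> ?C"
    proof
      fix g assume g: "g \<in> {g\<in>H #> x. Dl g = K}"
      have gc: "g \<in> carrier G" using g cosetc[OF x] by auto
      have a: "conj_class G g \<in> conj_classes G" unfolding conj_classes_def using gc by (rule imageI)
      have b: "conj_class G g \<subseteq> H #> x" using class_coset[OF gc x] g by simp
      have c: "centralizing_subgroup_class G H (conj_class G g) = K" using class_D[OF gc] g by simp
      have "conj_class G g \<in> ?C" using a b c by simp
      thus "g \<in> \<Union> ?C" using conj_self[OF gc] by (rule UnionI)
    qed
    show "\<Union> ?C \<subseteq> {g\<in>H #> x. Dl g = K}"
    proof
      fix g assume "g \<in> \<Union> ?C"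
      then obtain C where C: "C \<in> ?C" and gC: "g \<in> C" by (rule UnionE)
      obtain g0 where g0: "g0 \<in> carrier G" "C = conj_class G g0" using clsC[OF C] by (elim bexE)
      have "Dl g = Dl g0" using conj_elem(2)[OF g0(1)] gC g0(2) by simp
      also have "\<dots> = K" using C class_D[OF g0(1)] g0(2) by simp
      finally have "Dl g = K" .
      moreover have "g \<in> H #> x" using gC C by auto
      ultimately show "g \<in> {g\<in>H #> x. Dl g = K}" by simp
    qed
  qed
  have finCl: "finite (conj_classes G)" unfolding conj_classes_def using fin by (rule finite_imageI)
  have finC: "finite ?C" using finCl by (rule finite_subset[rotated]) auto
  have finEach: "\<forall>C\<in>?C. finite C"
  proof
    fix C assume C: "C \<in> ?C"
    obtain g0 where g0: "g0 \<in> carrier G" "C = conj_class G g0" using clsC[OF C] by (elim bexE)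
    show "finite C" using finc[OF conj_carrier[OF g0(1)]] g0(2) by simp
  qed
  have disj: "\<forall>A\<in>?C. \<forall>B\<in>?C. A \<noteq> B \<longrightarrow> A \<inter> B = {}"
  proof (intro ballI impI)
    fix A B assume A: "A \<in> ?C" and B: "B \<in> ?C" and ne: "A \<noteq> B"
    obtain a where a: "a \<in> carrier G" "A = conj_class G a" using clsC[OF A] by (elim bexE)
    obtain b where b: "b \<in> carrier G" "B = conj_class G b" using clsC[OF B] by (elim bexE)
    show "A \<inter> B = {}"
    proof (rule ccontr)
      assume "A \<inter> B \<noteq> {}"
      then obtain w where w: "w \<in> A" "w \<in> B" by blast
      have "conj_class G w = A" using conj_elem(1)[OF a(1)] w(1) a(2) by simp
      moreover have "conj_class G w = B" using conj_elem(1)[OF b(1)] w(2) b(2) by simp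
      ultimately show False using ne by simp
    qed
  qed
  have "card K * Eset x K = card K * (\<Sum>g\<in>\<Union> ?C. cH g)" unfolding Eset_def U ..
  also have "\<dots> = card K * (\<Sum>C\<in>?C. \<Sum>g\<in>C. cH g)"
    using sum.Union_disjoint[OF finEach disj, of cH] by (simp only: comp_def)
  also have "\<dots> = (\<Sum>C\<in>?C. card K * (\<Sum>g\<in>C. cH g))" by (rule sum_distrib_left)
  also have "\<dots> = (\<Sum>C\<in>?C. card H * order G)"
  proof (rule sum.cong[OF refl])
    fix C assume C: "C \<in> ?C"
    obtain g0 where g0: "g0 \<in> carrier G" "C = conj_class G g0" using cls C by blast
    have cpos: "card C > 0" using conj_self[OF g0(1)] g0(2) finEach C by (auto simp: card_gt_0_iff)
    have "card K * (\<Sum>g\<in>C. cH g) = (\<Sum>g\<in>C. card K * cH g)" by (rule sum_distrib_left)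
    also have "\<dots> = (\<Sum>g\<in>C. card H * (order G div card C))"
    proof (rule sum.cong[OF refl])
      fix g assume gC: "g \<in> C"
      have gc: "g \<in> carrier G" using gC g0 conj_carrier by auto
      have DK: "Dl g = K" using conj_elem(2)[OF g0(1)] gC g0 C class_D[OF g0(1)] by simp
      have cc: "conj_class G g = C" using conj_elem(1)[OF g0(1)] gC g0 by simp
      have os: "card C * card (centralizer_elt G g) = order G" using OS[OF gc] cc by simp
      hence "card (centralizer_elt G g) = order G div card C" using cpos by (metis nonzero_mult_div_cancel_left less_not_refl2)
      thus "card K * cH g = card H * (order G div card C)" using PF[OF gc] DK by (simp add: mult.commute)
    qed
    also have "\<dots> = card C * (card H * (order G div card C))" by simp
    also have "\<dots> = card H * (card C * (order G div card C))" by simp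
    also have "card C * (order G div card C) = order G"
      using OS[OF g0(1)] g0(2) by (metis dvd_mult_div_cancel dvd_triv_left)
    finally show "card K * (\<Sum>g\<in>C. cH g) = card H * order G" by simp
  qed
  also have "\<dots> = card ?C * (card H * order G)" by simp
  finally show ?thesis by simp
qed

end

theorem theorem2p1:
  fixes G (structure) and H K :: "'a set"
  assumes "group G" and "finite (carrier G)"
    and "H \<lhd> G" and "cyclic_group (G Mod H)"
    and "subgroup K G" and "H \<subseteq> K"
    and "x \<in> K" and "y \<in> K"
  shows "card {C \<in> conj_classes G. C \<subseteq> H #> x \<and> centralizing_subgroup_class G H C = K}
       = card {C \<in> conj_classes G. C \<subseteq> H #> y \<and> centralizing_subgroup_class G H C = K}"
proof -
  interpret ctx H G using assms by (simp add: ctx_def ctx_axioms_def)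
  have Kc: "K \<subseteq> carrier G" using assms(5) subgroup.subset by blast
  have xc: "x \<in> carrier G" "y \<in> carrier G" using Kc assms(7,8) by auto
  have "\<one> \<in> H" by simp
  hence "H \<noteq> {}" by blast
  hence "card H > 0" using finc[OF subset] by (simp add: card_gt_0_iff)
  moreover have "order G > 0" using fin one_closed unfolding order_def by (auto simp: card_gt_0_iff)
  ultimately have pos: "card H * order G > 0" by simp
  have "card {C \<in> conj_classes G. C \<subseteq> H #> x \<and> centralizing_subgroup_class G H C = K} * (card H * order G)
      = card {C \<in> conj_classes G. C \<subseteq> H #> y \<and> centralizing_subgroup_class G H C = K} * (card H * order G)"
    using count[OF xc(1)] count[OF xc(2)] E_indep[OF Kc assms(7,8)] by simp
  thus ?thesis using pos by simp
qed


end
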